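(* Let $D$ be a strong nonseparable digraph and let $(D_0,D_1,\ldots,D_k)$ be an ear decomposition of $D$. Let $i\in\{1,\ldots,k\}$ and let $P_{i-1}=(x_0,x_1,\ldots,x_{r-1},x_r)$ be the ear of $D_{i-1}$ in $D$ (so $D_i=D_{i-1}\cup P_{i-1}$), with $l(P_{i-1})\geq 2$. If $D_i$ has a kernel $N$ and one of the following holds: (1) $x_0,x_r\in N$; (2) $x_0\in N$ and $x_r\notin N$; (3) $x_0\notin N$, $x_r\in N$ and $l(P_{i-1})$ is even; (4) $x_0,x_r\notin N$ and $l(P_{i-1})$ is odd; then $D_{i-1}$ has a kernel.
   Context: All digraphs are finite, without loops or multiple arcs. Paths and cycles are directed; the length $l(P)$ of a path $P$ is its number of arcs. A digraph is strong if for every ordered pair of vertices $x,y$ there is a directed path from $x$ to $y$; it is nonseparable if its underlying undirected graph is nonseparable (has no cut vertex). For a subdigraph $H$ of $D$, an ear of $H$ in $D$ is a directed path $(x_0,\ldots,x_r)$ in $D$ whose end vertices lie in $H$ and whose internal vertices do not lie in $H$. An ear decomposition of a nonseparable strong digraph $D$ is a sequence $(D_0,\ldots,D_k)$ of nonseparable strong subdigraphs of $D$ such that $D_0$ is a directed cycle, $D_{j+1}=D_j\cup P_j$ with $P_j$ an ear of $D_j$ in $D$ for each $j\in\{0,\ldots,k-1\}$, and $D_k=D$. A kernel of a digraph is a set $N$ of vertices that is independent (no arc between two of its vertices) and absorbent (every vertex not in $N$ has an out-neighbour in $N$). *)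

theory Defs
  imports Main
begin

type_synonym 'a digraph = "'a set \<times> ('a \<times> 'a) set"

definition verts :: "'a digraph \<Rightarrow> 'a set" where "verts D = fst D"
definition arcs :: "'a digraph \<Rightarrow> ('a \<times> 'a) set" where "arcs D = snd D"

definition digraph :: "'a digraph \<Rightarrow> bool" where
  "digraph D \<longleftrightarrow> finite (verts D) \<and> arcs D \<subseteq> verts D \<times> verts D
     \<and> (\<forall>x. (x, x) \<notin> arcs D)"

definition subdigraph :: "'a digraph \<Rightarrow> 'a digraph \<Rightarrow> bool" where
  "subdigraph H D \<longleftrightarrow> digraph H \<and> verts H \<subseteq> verts D \<and> arcs H \<subseteq> arcs D"

definition path_arcs :: "'a list \<Rightarrow> ('a \<times> 'a) set" where
  "path_arcs xs = set (zip xs (tl xs))"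

definition add_path :: "'a digraph \<Rightarrow> 'a list \<Rightarrow> 'a digraph" where
  "add_path H xs = (verts H \<union> set xs, arcs H \<union> path_arcs xs)"

definition dpath :: "'a digraph \<Rightarrow> 'a list \<Rightarrow> bool" where
  "dpath D xs \<longleftrightarrow> xs \<noteq> [] \<and> distinct xs \<and> set xs \<subseteq> verts D
     \<and> (\<forall>i. Suc i < length xs \<longrightarrow> (xs ! i, xs ! Suc i) \<in> arcs D)"

definition plen :: "'a list \<Rightarrow> nat" where "plen xs = length xs - 1"

definition strong :: "'a digraph \<Rightarrow> bool" where
  "strong D \<longleftrightarrow> (\<forall>x\<in>verts D. \<forall>y\<in>verts D. (x, y) \<in> (arcs D \<inter> verts D \<times> verts D)\<^sup>*)"

definition uconnected_on :: "'a set \<Rightarrow> ('a \<times> 'a) set \<Rightarrow> bool" where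
  "uconnected_on S A \<longleftrightarrow> (\<forall>x\<in>S. \<forall>y\<in>S. (x, y) \<in> ((A \<union> A\<inverse>) \<inter> S \<times> S)\<^sup>*)"

definition nonseparable :: "'a digraph \<Rightarrow> bool" where
  "nonseparable D \<longleftrightarrow> uconnected_on (verts D) (arcs D)
     \<and> (\<forall>v\<in>verts D. uconnected_on (verts D - {v}) (arcs D))"

definition dcycle :: "'a digraph \<Rightarrow> bool" where
  "dcycle D \<longleftrightarrow> (\<exists>cs. length cs \<ge> 2 \<and> distinct cs \<and> verts D = set cs
     \<and> arcs D = {(cs ! i, cs ! ((i + 1) mod length cs)) | i. i < length cs})"

definition ear :: "'a digraph \<Rightarrow> 'a digraph \<Rightarrow> 'a list \<Rightarrow> bool" where
  "ear H D xs \<longleftrightarrow> dpath D xs \<and> hd xs \<in> verts H \<and> last xs \<in> verts H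
     \<and> (\<forall>i. 0 < i \<and> i < plen xs \<longrightarrow> xs ! i \<notin> verts H)"

definition ear_decomposition ::
  "'a digraph \<Rightarrow> (nat \<Rightarrow> 'a digraph) \<Rightarrow> (nat \<Rightarrow> 'a list) \<Rightarrow> nat \<Rightarrow> bool" where
  "ear_decomposition D Ds Ps k \<longleftrightarrow>
     (\<forall>j\<le>k. subdigraph (Ds j) D \<and> nonseparable (Ds j) \<and> strong (Ds j))
     \<and> dcycle (Ds 0)
     \<and> (\<forall>j<k. ear (Ds j) D (Ps j) \<and> Ds (Suc j) = add_path (Ds j) (Ps j))
     \<and> Ds k = D"

definition kernel :: "'a digraph \<Rightarrow> 'a set \<Rightarrow> bool" where
  "kernel D N \<longleftrightarrow> N \<subseteq> verts D
     \<and> (\<forall>x\<in>N. \<forall>y\<in>N. (x, y) \<notin> arcs D)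
     \<and> (\<forall>x\<in>verts D - N. \<exists>y\<in>N. (x, y) \<in> arcs D)"

end

theory Submission
  imports Defs
begin

lemma path_arcs_iff:
  "(a,b) \<in> path_arcs xs \<longleftrightarrow> (\<exists>m. Suc m < length xs \<and> a = xs!m \<and> b = xs!Suc m)"
  unfolding path_arcs_def by (auto simp: in_set_zip nth_tl; force)

lemma core:
  fixes H :: "'a digraph" and P :: "'a list" and N :: "'a set"
  assumes dH: "digraph H" and dp: "distinct P" and lenP: "length P \<ge> 3"
    and hd: "P!0 \<in> verts H" and lst: "P!(length P - 1) \<in> verts H"
    and int: "\<And>j. 0 < j \<Longrightarrow> j < length P - 1 \<Longrightarrow> P!j \<notin> verts H"
    and K: "kernel (add_path H P) N"
    and cases: "P!0 \<in> N \<or> (P!(length P - 1) \<in> N \<and> even (length P - 1))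
       \<or> (P!(length P - 1) \<notin> N \<and> odd (length P - 1))"
  shows "kernel H (N \<inter> verts H)"
proof -
  let ?r = "length P - 1"
  have arcsH: "arcs H \<subseteq> verts H \<times> verts H" using dH by (simp add: digraph_def)
  have NV: "N \<subseteq> verts H \<union> set P" and ind: "\<forall>x\<in>N. \<forall>y\<in>N. (x, y) \<notin> arcs H \<union> path_arcs P"
    and abs: "\<forall>x\<in>(verts H \<union> set P) - N. \<exists>y\<in>N. (x, y) \<in> arcs H \<union> path_arcs P"
    using K by (auto simp: kernel_def add_path_def verts_def arcs_def)
  have outP: "b = P!Suc j" if "(P!j, b) \<in> arcs H \<union> path_arcs P" "0 < j" "j < ?r" for j b
  proof -
    have "P!j \<notin> verts H" using int that(2,3) by blast
    hence "(P!j,b) \<notin> arcs H" using arcsH by blast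
    hence "(P!j,b) \<in> path_arcs P" using that(1) by blast
    then obtain m where m: "Suc m < length P" "P!j = P!m" "b = P!Suc m"
      unfolding path_arcs_iff by blast
    have jl: "j < length P" using that(3) by simp
    have "j = m" using nth_eq_iff_index_eq[OF dp jl, of m] m(1,2) by simp
    thus ?thesis using m(3) by simp
  qed
  have alt: "P!j \<in> N \<longleftrightarrow> P!Suc j \<notin> N" if "0 < j" "j < ?r" for j
  proof
    assume a: "P!j \<in> N"
    have "(P!j, P!Suc j) \<in> path_arcs P" using that path_arcs_iff by fastforce
    thus "P!Suc j \<notin> N" using a ind by blast
  next
    assume a: "P!Suc j \<notin> N"
    show "P!j \<in> N"
    proof (rule ccontr)
      assume "P!j \<notin> N"
      moreover have "P!j \<in> set P" using that by auto
      ultimately obtain y where "y \<in> N" "(P!j, y) \<in> arcs H \<union> path_arcs P" using abs by blast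
      thus False using outP[OF _ that] a by blast
    qed
  qed
  have parI: "1 \<le> j \<longrightarrow> j \<le> ?r \<longrightarrow> (P!j \<in> N \<longleftrightarrow> (P!1 \<in> N \<longleftrightarrow> even (j - 1)))" for j
  proof (induction j)
    case 0 then show ?case by simp
  next
    case (Suc n)
    show ?case
    proof (intro impI)
      assume a: "1 \<le> Suc n" "Suc n \<le> ?r"
      show "P!Suc n \<in> N \<longleftrightarrow> (P!1 \<in> N \<longleftrightarrow> even (Suc n - 1))"
      proof (cases "n = 0")
        case True thus ?thesis by simp
      next
        case False
        hence h: "P!n \<in> N \<longleftrightarrow> (P!1 \<in> N \<longleftrightarrow> even (n - 1))" using Suc.IH a by simp
        have "P!n \<in> N \<longleftrightarrow> P!Suc n \<notin> N" using alt[of n] False a by simp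
        moreover have "even (Suc n - 1) \<longleftrightarrow> \<not> even (n - 1)" using False by (cases n) auto
        ultimately show ?thesis using h by blast
      qed
    qed
  qed
  have par: "P!j \<in> N \<longleftrightarrow> (P!1 \<in> N \<longleftrightarrow> even (j - 1))" if "1 \<le> j" "j \<le> ?r" for j
    using parI that by blast
  have x1: "P!0 \<notin> N \<Longrightarrow> P!1 \<notin> N"
  proof -
    assume "P!0 \<notin> N"
    hence c: "(P!?r \<in> N \<and> even ?r) \<or> (P!?r \<notin> N \<and> odd ?r)" using cases by blast
    have "P!?r \<in> N \<longleftrightarrow> (P!1 \<in> N \<longleftrightarrow> even (?r - 1))" using par[of ?r] lenP by auto
    moreover have "even (?r - 1) \<longleftrightarrow> odd ?r" using lenP by auto
    ultimately show "P!1 \<notin> N" using c by auto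
  qed
  show ?thesis unfolding kernel_def
  proof (intro conjI)
    show "N \<inter> verts H \<subseteq> verts H" by blast
    show "\<forall>x\<in>N \<inter> verts H. \<forall>y\<in>N \<inter> verts H. (x, y) \<notin> arcs H" using ind by blast
    show "\<forall>x\<in>verts H - N \<inter> verts H. \<exists>y\<in>N \<inter> verts H. (x, y) \<in> arcs H"
    proof
      fix x assume x: "x \<in> verts H - N \<inter> verts H"
      then obtain y where y: "y \<in> N" "(x, y) \<in> arcs H \<union> path_arcs P" using abs by blast
      show "\<exists>y\<in>N \<inter> verts H. (x, y) \<in> arcs H"
      proof (cases "(x,y) \<in> arcs H")
        case True thus ?thesis using y arcsH by blast
      next
        case False
        hence "(x,y) \<in> path_arcs P" using y(2) by blast
        then obtain m where m: "Suc m < length P" "x = P!m" "y = P!Suc m"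
          unfolding path_arcs_iff by blast
        have "m = 0"
        proof (rule ccontr)
          assume "m \<noteq> 0"
          moreover have "m < ?r" using m by auto
          ultimately show False using int[of m] x m by auto
        qed
        hence "P!0 \<notin> N" "P!1 \<in> N" using x m y by auto
        thus ?thesis using x1 by blast
      qed
    qed
  qed
qed

theorem mainTheorem6:
  fixes D :: "'a digraph" and Ds :: "nat \<Rightarrow> 'a digraph" and Ps :: "nat \<Rightarrow> 'a list"
    and k i :: nat and N :: "'a set"
  assumes "digraph D" and "strong D" and "nonseparable D"
    and "ear_decomposition D Ds Ps k"
    and "1 \<le> i" and "i \<le> k"
    and "plen (Ps (i - 1)) \<ge> 2"
    and "kernel (Ds i) N"
    and "(hd (Ps (i - 1)) \<in> N \<and> last (Ps (i - 1)) \<in> N)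
       \<or> (hd (Ps (i - 1)) \<in> N \<and> last (Ps (i - 1)) \<notin> N)
       \<or> (hd (Ps (i - 1)) \<notin> N \<and> last (Ps (i - 1)) \<in> N \<and> even (plen (Ps (i - 1))))
       \<or> (hd (Ps (i - 1)) \<notin> N \<and> last (Ps (i - 1)) \<notin> N \<and> odd (plen (Ps (i - 1))))"
  shows "\<exists>N'. kernel (Ds (i - 1)) N'"
proof -
  let ?H = "Ds (i - 1)" and ?P = "Ps (i - 1)"
  have lt: "i - 1 < k" "i - 1 \<le> k" using assms(5,6) by auto
  have dH: "digraph ?H" using assms(4) lt by (auto simp: ear_decomposition_def subdigraph_def)
  have ear: "ear ?H D ?P" and Di: "Ds i = add_path ?H ?P"
    using assms(4,5) lt by (auto simp: ear_decomposition_def)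
  have ne: "?P \<noteq> []" and dp: "distinct ?P" using ear by (auto simp: ear_def dpath_def)
  have len: "length ?P \<ge> 3" using assms(7) by (simp add: plen_def)
  have hdP: "hd ?P = ?P!0" using ne by (simp add: hd_conv_nth)
  have lastP: "last ?P = ?P!(length ?P - 1)" using ne by (simp add: last_conv_nth)
  show ?thesis
  proof
    show "kernel ?H (N \<inter> verts ?H)"
    proof (rule core[OF dH dp len])
      show "?P!0 \<in> verts ?H" using ear hdP by (simp add: ear_def)
      show "?P!(length ?P - 1) \<in> verts ?H" using ear lastP by (simp add: ear_def)
      show "\<And>j. 0 < j \<Longrightarrow> j < length ?P - 1 \<Longrightarrow> ?P!j \<notin> verts ?H"
        using ear by (simp add: ear_def plen_def)
      show "kernel (add_path ?H ?P) N" using assms(8) Di by simp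
      show "?P!0 \<in> N \<or> (?P!(length ?P - 1) \<in> N \<and> even (length ?P - 1))
       \<or> (?P!(length ?P - 1) \<notin> N \<and> odd (length ?P - 1))"
        using assms(9) hdP lastP by (auto simp: plen_def)
    qed
  qed
qed

end
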